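(* Let $X=[0,1]$ with the Euclidean metric, $T(x)=2x \bmod 1$, and $\mu$ Lebesgue measure. Let $(r_n)_n$ be a decreasing sequence of positive numbers such that \[ \sum_{n=0}^\infty \frac{1}{2^{2n} r_{2^n}}<\infty. \] Then $(\mu\times\mu)(\liminf_n E_{n,r_n}^T)=1$.
   Context: For $n\in\mathbb{N}$ and $r>0$, $E_{n,r}^{T}:=\{(x,y)\in X\times X : |T^i x- T^j y|<r \text{ for some } 0\le i,j<n\}$; $E_{n,r_n}^T$ is this set with $r=r_n$. *)

theory Defs
  imports "HOL-Analysis.Analysis"
begin

definition doubling :: "real \<Rightarrow> real" where
  "doubling x = frac (2 * x)"

definition E_set :: "(real \<Rightarrow> real) \<Rightarrow> nat \<Rightarrow> real \<Rightarrow> (real \<times> real) set" where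
  "E_set T n r = {(x, y). x \<in> {0..1} \<and> y \<in> {0..1} \<and>
      (\<exists>i<n. \<exists>j<n. \<bar>(T ^^ i) x - (T ^^ j) y\<bar> < r)}"

definition mu :: "real measure" where
  "mu = restrict_space lborel {0..1}"

end

theory Submission
  imports Defs
begin


lemma card_div_fiber:
  fixes a b :: nat assumes a: "a > 0"
  shows "card {p. p < a*b \<and> P (p div a)} = a * card {u. u < b \<and> P u}"
proof -
  have eq: "{p. p < a*b \<and> P (p div a)} = (\<lambda>(u,r). a*u + r) ` ({u. u < b \<and> P u} \<times> {..<a})"
  proof (rule set_eqI, rule iffI)
    fix p assume "p \<in> {p. p < a*b \<and> P (p div a)}"
    then have p: "p < a*b" "P (p div a)" by auto
    have "p div a < b" using p(1) a by (simp add: div_less_iff_less_mult mult.commute)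
    moreover have "p = a*(p div a) + p mod a" by simp
    moreover have "p mod a < a" using a by simp
    ultimately show "p \<in> (\<lambda>(u,r). a*u + r) ` ({u. u < b \<and> P u} \<times> {..<a})"
      using p by (intro image_eqI[of _ _ "(p div a, p mod a)"]) auto
  next
    fix p assume "p \<in> (\<lambda>(u,r). a*u + r) ` ({u. u < b \<and> P u} \<times> {..<a})"
    then obtain u r where ur: "p = a*u+r" "u < b" "P u" "r < a" by auto
    have "p div a = u" using ur a by simp
    moreover have "a*u + r < a*b"
    proof -
      have "a*u + r < a*(u+1)" using ur by simp
      also have "\<dots> \<le> a*b" using ur by (intro mult_le_mono2) simp
      finally show ?thesis .
    qed
    ultimately show "p \<in> {p. p < a*b \<and> P (p div a)}" using ur by auto
  qed
  have inj: "inj_on (\<lambda>(u,r). a*u + r) ({u. u < b \<and> P u} \<times> {..<a})"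
  proof (rule inj_onI)
    fix x y assume h0: "x \<in> {u. u < b \<and> P u} \<times> {..<a}" "y \<in> {u. u < b \<and> P u} \<times> {..<a}" "(\<lambda>(u,r). a*u + r) x = (\<lambda>(u,r). a*u + r) y"
    obtain u r u' r' where xy: "x = (u,r)" "y = (u',r')" by fastforce
    have h: "(u, r) \<in> {u. u < b \<and> P u} \<times> {..<a}" "(u', r') \<in> {u. u < b \<and> P u} \<times> {..<a}" "a*u + r = a*u' + r'" using h0 xy by auto
    have "r < a" "r' < a" using h by auto
    then have "(a*u + r) div a = u" "(a*u'+r') div a = u'" using a by simp_all
    with h have "u = u' \<and> r = r'" by (metis add_left_cancel)
    then show "x = y" using xy by simp
  qed
  show ?thesis unfolding eq using card_image[OF inj]
    by (simp add: card_cartesian_product)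
qed

lemma card_mod_fiber:
  fixes m c v :: nat assumes "v < m"
  shows "card {u. u < m*c \<and> u mod m = v} = c"
proof -
  have eq: "{u. u < m*c \<and> u mod m = v} = (\<lambda>k. v + m*k) ` {..<c}"
  proof (rule set_eqI, rule iffI)
    fix u assume "u \<in> {u. u < m*c \<and> u mod m = v}"
    then have u: "u < m*c" "u mod m = v" by auto
    have "u = v + m * (u div m)" using u(2) by (metis mod_mult_div_eq add.commute mult.commute)
    moreover have "u div m < c" using u(1) assms by (simp add: div_less_iff_less_mult mult.commute)
    ultimately show "u \<in> (\<lambda>k. v + m*k) ` {..<c}" by blast
  next
    fix u assume "u \<in> (\<lambda>k. v + m*k) ` {..<c}"
    then obtain k where k: "u = v + m*k" "k < c" by auto
    have "v + m*k < m*(k+1)" using assms by simp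
    also have "\<dots> \<le> m*c" using k by (intro mult_le_mono2) simp
    finally show "u \<in> {u. u < m*c \<and> u mod m = v}" using k assms by simp
  qed
  have "inj_on (\<lambda>k. v + m*k) {..<c}" using assms by (intro inj_onI) simp
  then show ?thesis unfolding eq by (simp add: card_image)
qed

definition win :: "nat \<Rightarrow> nat \<Rightarrow> nat \<Rightarrow> nat" where
  "win t m p = p div 2^t mod 2^m"

lemma card_win_eq:
  assumes "t + m \<le> L" "v < 2^m"
  shows "card {p. p < 2^L \<and> win t m p = v} = 2^(L-m)"
proof -
  have L1: "(2::nat)^L = 2^t * 2^(L-t)" using assms by (simp add: power_add[symmetric])
  have L2: "(2::nat)^(L-t) = 2^m * 2^(L-t-m)" using assms by (simp add: power_add[symmetric])
  have "card {p. p < 2^L \<and> win t m p = v} = card {p. p < 2^t * 2^(L-t) \<and> (p div 2^t) mod 2^m = v}"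
    unfolding win_def L1 ..
  also have "\<dots> = 2^t * card {u. u < 2^(L-t) \<and> u mod 2^m = v}"
    by (rule card_div_fiber) simp
  also have "\<dots> = 2^t * 2^(L-t-m)" unfolding L2 using assms by (simp add: card_mod_fiber)
  also have "\<dots> = 2^(L-m)" using assms by (simp add: power_add[symmetric])
  finally show ?thesis .
qed

lemma card_win_le:
  assumes "t + m \<le> L"
  shows "card {p. p < 2^L \<and> win t m p = v} \<le> 2^(L-m)"
proof (cases "v < 2^m")
  case True then show ?thesis using card_win_eq[OF assms] by simp
next
  case False
  have "win t m p < 2^m" for p by (simp add: win_def)
  then have e: "{p. p < 2^L \<and> win t m p = v} = {}" using False by (metis (mono_tags, lifting) empty_Collect_eq)
  show ?thesis by (subst e) simp
qed

lemma win_split: "win t (d+m) p = win t d p + 2^d * win (t+d) m p"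
  unfolding win_def
  by (simp add: power_add mod_mult2_eq div_mult2_eq)

lemma win_trunc: "d \<le> m \<Longrightarrow> win t d p = win t m p mod 2^d"
  unfolding win_def by (simp add: mod_mod_cancel le_imp_power_dvd)

lemma win_less: "win t m p < 2^m"
  by (simp add: win_def)

lemma finite_below: "finite {p::nat. p < n \<and> Q p}" by simp

lemma real_pow_diff: "k \<le> L \<Longrightarrow> real (2^(L-k)) = 2^L / 2^k"
proof -
  assume "k \<le> L"
  then have "(2::real)^L = 2^k * 2^(L-k)" by (simp add: power_add[symmetric])
  then show ?thesis by simp
qed

lemma card_two_win:
  assumes "s + d + l \<le> L"
  shows "real (card {p. p < 2^L \<and> win s l p = a \<and> win (s+d) l p = b}) \<le> 2^L / 2^(l + min d l)"
proof (cases "d \<le> l")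
  case True
  have sub: "{p. p < 2^L \<and> win s l p = a \<and> win (s+d) l p = b} \<subseteq> {p. p < 2^L \<and> win s (d+l) p = a mod 2^d + 2^d*b}"
    using win_split[of s d l] win_trunc[OF True, of s] by auto
  have "card {p. p < 2^L \<and> win s l p = a \<and> win (s+d) l p = b} \<le> card {p. p < 2^L \<and> win s (d+l) p = a mod 2^d + 2^d*b}"
    by (rule card_mono[OF finite_below sub])
  also have "\<dots> \<le> 2^(L-(d+l))" by (rule card_win_le) (use assms in simp)
  finally have "real (card {p. p < 2^L \<and> win s l p = a \<and> win (s+d) l p = b}) \<le> real (2^(L-(d+l)))"
    by (simp only: of_nat_le_iff)
  also have "\<dots> = 2^L / 2^(d+l)" using assms by (intro real_pow_diff) simp
  finally show ?thesis using True by (simp add: add.commute)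
next
  case False
  define U where "U = (\<Union>u\<in>{..<2^(d-l)}. {p. p < 2^L \<and> win s (d+l) p = a + 2^l*u + 2^d*b})"
  have sub: "{p. p < 2^L \<and> win s l p = a \<and> win (s+d) l p = b} \<subseteq> U"
  proof
    fix p assume p: "p \<in> {p. p < 2^L \<and> win s l p = a \<and> win (s+d) l p = b}"
    have dd: "d = l + (d - l)" using False by simp
    have "win s d p = win s l p + 2^l * win (s+l) (d-l) p"
      using win_split[of s l "d-l" p] dd by simp
    then have "win s (d+l) p = a + 2^l * win (s+l) (d-l) p + 2^d*b"
      using win_split[of s d l p] p by simp
    then show "p \<in> U" unfolding U_def using p win_less[of "s+l" "d-l" p] by blast
  qed
  have "card {p. p < 2^L \<and> win s l p = a \<and> win (s+d) l p = b} \<le> card U"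
    unfolding U_def by (rule card_mono[OF _ sub[unfolded U_def]]) auto
  also have "\<dots> \<le> (\<Sum>u\<in>{..<2^(d-l)}. card {p. p < 2^L \<and> win s (d+l) p = a + 2^l*u + 2^d*b})"
    unfolding U_def by (rule card_UN_le) simp
  also have "\<dots> \<le> (\<Sum>u\<in>{..<(2::nat)^(d-l)}. 2^(L-(d+l)))"
    by (intro sum_mono card_win_le) (use assms in simp)
  also have "\<dots> = 2^(d-l) * 2^(L-(d+l))" by simp
  also have "\<dots> = 2^(L - (l+l))"
  proof -
    have "(d - l) + (L - (d+l)) = L - (l+l)" using assms False by simp
    then show ?thesis by (metis power_add)
  qed
  finally have "real (card {p. p < 2^L \<and> win s l p = a \<and> win (s+d) l p = b}) \<le> real (2^(L-(l+l)))"
    by (simp only: of_nat_le_iff)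
  also have "\<dots> = 2^L / 2^(l+l)" using assms False by (intro real_pow_diff) simp
  finally show ?thesis using False by simp
qed

definition cw :: "nat \<Rightarrow> nat \<Rightarrow> nat \<Rightarrow> nat \<Rightarrow> nat" where
  "cw N l i p = win (N - i) l p"

definition dst :: "nat \<Rightarrow> nat \<Rightarrow> nat" where
  "dst i j = (if i \<le> j then j - i else i - j)"

definition Cc :: "nat \<Rightarrow> nat \<Rightarrow> nat \<Rightarrow> nat \<Rightarrow> nat \<Rightarrow> nat \<Rightarrow> real" where
  "Cc N l i i' a b = (\<Sum>p<2^(N+l). of_bool (cw N l i p = a \<and> cw N l i' p = b))"

lemma cw_less: "cw N l i p < 2^l" by (simp add: cw_def win_less)

lemma set_below_eq: "{..<n} \<inter> {p. Q p} = {p. p < n \<and> Q p}" by auto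

lemma Cc_le:
  assumes "i < N" "i' < N"
  shows "Cc N l i i' a b \<le> 2^(N+l) / 2^(l + min (dst i i') l)"
proof (cases "i' \<le> i")
  case True
  have "Cc N l i i' a b = real (card {p. p < 2^(N+l) \<and> win (N-i) l p = a \<and> win ((N-i) + (i-i')) l p = b})"
    unfolding Cc_def cw_def using True assms by (simp add: set_below_eq)
  also have "\<dots> \<le> 2^(N+l) / 2^(l + min (i-i') l)"
    by (rule card_two_win) (use True assms in simp)
  moreover have "dst i i' = i - i'" using True by (simp add: dst_def)
  ultimately show ?thesis by simp
next
  case False
  have "Cc N l i i' a b = real (card {p. p < 2^(N+l) \<and> win (N-i') l p = b \<and> win ((N-i') + (i'-i)) l p = a})"
    unfolding Cc_def cw_def using False assms by (simp add: set_below_eq conj_commute)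
  also have "\<dots> \<le> 2^(N+l) / 2^(l + min (i'-i) l)"
    by (rule card_two_win) (use False assms in simp)
  moreover have "dst i i' = i' - i" using False by (simp add: dst_def)
  ultimately show ?thesis by simp
qed

lemma sum_delta_pair:
  fixes x y :: nat
  assumes "x < n" "y < m"
  shows "(\<Sum>a<n. \<Sum>b<m. of_bool (x = a \<and> y = b) :: real) = 1"
proof -
  have "(\<Sum>a<n. \<Sum>b<m. of_bool (x = a \<and> y = b) :: real) = (\<Sum>a<n. if a = x then 1 else 0)"
    by (intro sum.cong refl) (use assms in \<open>auto simp: of_bool_def\<close>)
  also have "\<dots> = 1" using assms by simp
  finally show ?thesis .
qed

lemma Cc_sum: "(\<Sum>a<2^l. \<Sum>b<2^l. Cc N l i i' a b) = 2^(N+l)"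
proof -
  have "(\<Sum>a<2^l. \<Sum>b<2^l. Cc N l i i' a b) =
        (\<Sum>a<2^l. \<Sum>b<2^l. \<Sum>p<2^(N+l). of_bool (cw N l i p = a \<and> cw N l i' p = b))"
    unfolding Cc_def ..
  also have "\<dots> = (\<Sum>a<2^l. \<Sum>p<2^(N+l). \<Sum>b<2^l. of_bool (cw N l i p = a \<and> cw N l i' p = b))"
    by (rule sum.cong[OF refl], rule sum.swap)
  also have "\<dots> = (\<Sum>p<2^(N+l). \<Sum>a<2^l. \<Sum>b<2^l. of_bool (cw N l i p = a \<and> cw N l i' p = b))"
    by (rule sum.swap)
  also have "\<dots> = (\<Sum>p<(2::nat)^(N+l). 1)"
    by (intro sum.cong refl sum_delta_pair cw_less)
  finally show ?thesis by simp
qed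

lemma K_count:
  assumes "i < N" "a < 2^l"
  shows "(\<Sum>p<2^(N+l). of_bool (cw N l i p = a) :: real) = 2^(N+l) / 2^l"
proof -
  have "(\<Sum>p<2^(N+l). of_bool (cw N l i p = a) :: real) = real (card {p. p < 2^(N+l) \<and> win (N-i) l p = a})"
    unfolding cw_def by (simp add: set_below_eq)
  also have "\<dots> = real (2^(N+l-l))" by (subst card_win_eq) (use assms in auto)
  also have "\<dots> = 2^(N+l) / 2^l" by (rule real_pow_diff) simp
  finally show ?thesis .
qed

lemma sum_delta_weight:
  fixes y :: nat and W :: "nat \<Rightarrow> real"
  assumes "y < m"
  shows "(\<Sum>b<m. of_bool (y = b) * W b) = W y"
proof -
  have "(\<Sum>b<m. of_bool (y = b) * W b) = (\<Sum>b<m. if b = y then W y else 0)"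
    by (intro sum.cong refl) auto
  then show ?thesis using assms by simp
qed

lemma sum2_mult_right: "(\<Sum>a\<in>A. \<Sum>b\<in>B. C a b * (x::real)) = (\<Sum>a\<in>A. \<Sum>b\<in>B. C a b) * x"
  by (simp add: sum_distrib_right)

lemma sum2_mult_left: "(\<Sum>a\<in>A. \<Sum>b\<in>B. (x::real) * C a b) = x * (\<Sum>a\<in>A. \<Sum>b\<in>B. C a b)"
  by (simp add: sum_distrib_left)

lemma sum_delta_pair_weight:
  fixes x y :: nat and Z :: "nat \<Rightarrow> nat \<Rightarrow> real"
  assumes "x < n" "y < m"
  shows "(\<Sum>a<n. \<Sum>b<m. of_bool (x = a \<and> y = b) * Z a b) = Z x y"
proof -
  have "(\<Sum>b<m. of_bool (x = a \<and> y = b) * Z a b) = (if a = x then Z x y else 0)" for a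
  proof (cases "a = x")
    case True then show ?thesis using sum_delta_weight[OF assms(2), of "Z x"] by simp
  qed simp
  then have "(\<Sum>a<n. \<Sum>b<m. of_bool (x = a \<and> y = b) * Z a b) = (\<Sum>a<n. if a = x then Z x y else 0)"
    by (intro sum.cong refl)
  also have "\<dots> = Z x y" using assms by simp
  finally show ?thesis .
qed

definition Qs :: "nat \<Rightarrow> nat \<Rightarrow> nat \<Rightarrow> nat \<Rightarrow> nat \<Rightarrow> nat \<Rightarrow> real" where
  "Qs N l i j i' j' = (\<Sum>p<2^(N+l). \<Sum>q<2^(N+l).
      of_bool (cw N l i p = cw N l j q) * of_bool (cw N l i' p = cw N l j' q))"

lemma swap_inner4:
  "(\<Sum>p\<in>A. \<Sum>q\<in>B. \<Sum>a\<in>C. \<Sum>b\<in>D. G p q a b) = (\<Sum>a\<in>C. \<Sum>b\<in>D. \<Sum>p\<in>A. \<Sum>q\<in>B. G p q a b)"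
proof -
  have "(\<Sum>p\<in>A. \<Sum>q\<in>B. \<Sum>a\<in>C. \<Sum>b\<in>D. G p q a b) = (\<Sum>p\<in>A. \<Sum>a\<in>C. \<Sum>q\<in>B. \<Sum>b\<in>D. G p q a b)"
    by (rule sum.cong[OF refl], rule sum.swap)
  also have "\<dots> = (\<Sum>p\<in>A. \<Sum>a\<in>C. \<Sum>b\<in>D. \<Sum>q\<in>B. G p q a b)"
    by (rule sum.cong[OF refl], rule sum.cong[OF refl], rule sum.swap)
  also have "\<dots> = (\<Sum>a\<in>C. \<Sum>p\<in>A. \<Sum>b\<in>D. \<Sum>q\<in>B. G p q a b)"
    by (rule sum.swap)
  also have "\<dots> = (\<Sum>a\<in>C. \<Sum>b\<in>D. \<Sum>p\<in>A. \<Sum>q\<in>B. G p q a b)"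
    by (rule sum.cong[OF refl], rule sum.swap)
  finally show ?thesis .
qed

lemma Qs_eq: "Qs N l i j i' j' = (\<Sum>a<2^l. \<Sum>b<2^l. Cc N l i i' a b * Cc N l j j' a b)"
proof -
  let ?I = "\<lambda>p a b. of_bool (cw N l i p = a \<and> cw N l i' p = b) :: real"
  let ?J = "\<lambda>q a b. of_bool (cw N l j q = a \<and> cw N l j' q = b) :: real"
  have pt: "of_bool (cw N l i p = cw N l j q) * of_bool (cw N l i' p = cw N l j' q)
        = (\<Sum>a<2^l. \<Sum>b<2^l. ?I p a b * ?J q a b)" for p q
    by (subst sum_delta_pair_weight[OF cw_less cw_less]) auto
  have "Qs N l i j i' j' = (\<Sum>p<2^(N+l). \<Sum>q<2^(N+l). \<Sum>a<2^l. \<Sum>b<2^l. ?I p a b * ?J q a b)"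
    unfolding Qs_def pt ..
  also have "\<dots> = (\<Sum>a<2^l. \<Sum>b<2^l. \<Sum>p<2^(N+l). \<Sum>q<2^(N+l). ?I p a b * ?J q a b)"
    by (rule swap_inner4)
  also have "\<dots> = (\<Sum>a<2^l. \<Sum>b<2^l. Cc N l i i' a b * Cc N l j j' a b)"
    unfolding Cc_def by (simp only: sum_product)
  finally show ?thesis .
qed

lemma Cc_nonneg: "Cc N l i i' a b \<ge> 0" unfolding Cc_def by (intro sum_nonneg) simp

lemma Qs_le1:
  assumes "j < N" "j' < N"
  shows "Qs N l i j i' j' \<le> 2^(N+l) * (2^(N+l) / 2^(l + min (dst j j') l))"
proof -
  have "Qs N l i j i' j' \<le> (\<Sum>a<2^l. \<Sum>b<2^l. Cc N l i i' a b * (2^(N+l) / 2^(l + min (dst j j') l)))"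
    unfolding Qs_eq by (intro sum_mono mult_left_mono Cc_le assms Cc_nonneg)
  also have "\<dots> = 2^(N+l) * (2^(N+l) / 2^(l + min (dst j j') l))"
    unfolding sum2_mult_right Cc_sum ..
  finally show ?thesis .
qed

lemma Qs_le2:
  assumes "i < N" "i' < N"
  shows "Qs N l i j i' j' \<le> 2^(N+l) * (2^(N+l) / 2^(l + min (dst i i') l))"
proof -
  have "Qs N l i j i' j' \<le> (\<Sum>a<2^l. \<Sum>b<2^l. (2^(N+l) / 2^(l + min (dst i i') l)) * Cc N l j j' a b)"
    unfolding Qs_eq by (intro sum_mono mult_right_mono Cc_le assms Cc_nonneg)
  also have "\<dots> = 2^(N+l) * (2^(N+l) / 2^(l + min (dst i i') l))"
    unfolding sum2_mult_left Cc_sum by (simp add: mult.commute)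
  finally show ?thesis .
qed

lemma half_pow_le: "(1/2::real)^(max d e) \<le> (3/4)^(d+e)"
proof -
  have "(1/2::real)^(max d e) \<le> (9/16)^(max d e)" by (intro power_mono) auto
  also have "\<dots> = (3/4)^(2 * max d e)" by (simp add: power_mult power2_eq_square)
  also have "\<dots> \<le> (3/4)^(d+e)" by (intro power_decreasing) auto
  finally show ?thesis .
qed

lemma Qs_final:
  assumes "i < N" "j < N" "i' < N" "j' < N"
  shows "Qs N l i j i' j' \<le> (2^(N+l) * 2^(N+l)) * (1/4^l + (3/4)^(dst i i' + dst j j') / 2^l)"
proof -
  define T :: real where "T = 2^(N+l)"
  define d where "d = dst i i'"
  define e where "e = dst j j'"
  have T: "T > 0" unfolding T_def by simp
  have q1: "Qs N l i j i' j' \<le> T * (T / 2^(l + min e l))"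
    using Qs_le1[OF assms(2,4), of l i i'] unfolding T_def e_def .
  have q2: "Qs N l i j i' j' \<le> T * (T / 2^(l + min d l))"
    using Qs_le2[OF assms(1,3), of l j j'] unfolding T_def d_def .
  have nn: "(3/4::real)^(d+e) / 2^l \<ge> 0" by simp
  have four: "(4::real)^l = 2^(l+l)" by (simp add: power_add power_mult_distrib[symmetric])
  have "Qs N l i j i' j' \<le> (T * T) * (1/4^l + (3/4)^(d+e) / 2^l)"
  proof (cases "d \<ge> l \<or> e \<ge> l")
    case True
    then have "Qs N l i j i' j' \<le> T * (T / 2^(l+l))" using q1 q2 by (auto simp: min_def split: if_splits)
    also have "\<dots> = (T*T) * (1/4^l)" unfolding four by simp
    also have "\<dots> \<le> (T * T) * (1/4^l + (3/4)^(d+e) / 2^l)"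
      using T nn by (intro mult_left_mono) auto
    finally show ?thesis .
  next
    case False
    then have "Qs N l i j i' j' \<le> T * (T / 2^(l + max d e))" using q1 q2 by (auto simp: max_def)
    also have "\<dots> = (T*T) * ((1/2)^(max d e) / 2^l)" by (simp add: power_add power_one_over)
    also have "\<dots> \<le> (T*T) * ((3/4)^(d+e) / 2^l)"
      using T by (intro mult_left_mono divide_right_mono half_pow_le) auto
    also have "\<dots> \<le> (T * T) * (1/4^l + (3/4)^(d+e) / 2^l)"
      using T by (intro mult_left_mono) auto
    finally show ?thesis .
  qed
  then show ?thesis unfolding T_def d_def e_def .
qed

lemma geom_le4: "(\<Sum>k<n. (3/4::real)^k) \<le> 4"
proof -
  have "(\<Sum>k<n. (3/4::real)^k) = (1 - (3/4)^n) / (1 - 3/4)" by (simp add: sum_gp_strict)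
  also have "\<dots> \<le> 4" by simp
  finally show ?thesis .
qed

lemma sum_reindex_le:
  fixes f :: "nat \<Rightarrow> nat"
  assumes "inj_on f A" "f ` A \<subseteq> {..<n}"
  shows "(\<Sum>a\<in>A. (3/4::real)^(f a)) \<le> 4"
proof -
  have fin: "finite A" using assms finite_subset[OF assms(2)] finite_image_iff by blast
  have "(\<Sum>a\<in>A. (3/4::real)^(f a)) = (\<Sum>k\<in>f`A. (3/4::real)^k)"
    by (simp add: sum.reindex[OF assms(1)])
  also have "\<dots> \<le> (\<Sum>k<n. (3/4::real)^k)" by (intro sum_mono2 assms) auto
  also have "\<dots> \<le> 4" by (rule geom_le4)
  finally show ?thesis .
qed

lemma geom_dst: "(\<Sum>i'<N. (3/4::real)^(dst i i')) \<le> 8"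
proof -
  have "(\<Sum>i'<N. (3/4::real)^(dst i i')) \<le> (\<Sum>i'\<in>{..i} \<union> {i<..<N}. (3/4::real)^(dst i i'))"
    by (intro sum_mono2) auto
  also have "\<dots> = (\<Sum>i'\<in>{..i}. (3/4::real)^(dst i i')) + (\<Sum>i'\<in>{i<..<N}. (3/4::real)^(dst i i'))"
    by (intro sum.union_disjoint) auto
  also have "(\<Sum>i'\<in>{..i}. (3/4::real)^(dst i i')) = (\<Sum>i'\<in>{..i}. (3/4::real)^(i - i'))"
    by (intro sum.cong refl) (auto simp: dst_def)
  also have "\<dots> \<le> 4"
    by (rule sum_reindex_le[where n = "Suc i"]) (auto simp: inj_on_def)
  also have "(\<Sum>i'\<in>{i<..<N}. (3/4::real)^(dst i i')) = (\<Sum>i'\<in>{i<..<N}. (3/4::real)^(i' - i))"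
    by (intro sum.cong refl) (auto simp: dst_def)
  also have "\<dots> \<le> 4"
    by (rule sum_reindex_le[where n = N]) (auto simp: inj_on_def)
  finally show ?thesis by simp
qed

definition Sm :: "nat \<Rightarrow> nat \<Rightarrow> nat \<Rightarrow> nat \<Rightarrow> real" where
  "Sm N l p q = (\<Sum>i<N. \<Sum>j<N. of_bool (cw N l i p = cw N l j q))"

lemma swap_inner3:
  "(\<Sum>p\<in>A. \<Sum>q\<in>B. \<Sum>a\<in>C. G p q a) = (\<Sum>a\<in>C. \<Sum>p\<in>A. \<Sum>q\<in>B. G p q a)"
proof -
  have "(\<Sum>p\<in>A. \<Sum>q\<in>B. \<Sum>a\<in>C. G p q a) = (\<Sum>p\<in>A. \<Sum>a\<in>C. \<Sum>q\<in>B. G p q a)"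
    by (rule sum.cong[OF refl], rule sum.swap)
  also have "\<dots> = (\<Sum>a\<in>C. \<Sum>p\<in>A. \<Sum>q\<in>B. G p q a)" by (rule sum.swap)
  finally show ?thesis .
qed

lemma pair_count:
  assumes "i < N" "j < N"
  shows "(\<Sum>p<2^(N+l). \<Sum>q<2^(N+l). of_bool (cw N l i p = cw N l j q) :: real)
      = 2^(N+l) * 2^(N+l) / 2^l"
proof -
  have pt: "of_bool (cw N l i p = cw N l j q) = (\<Sum>a<2^l. of_bool (cw N l i p = a) * of_bool (cw N l j q = a) :: real)" for p q
    by (subst sum_delta_weight[OF cw_less]) auto
  have "(\<Sum>p<2^(N+l). \<Sum>q<2^(N+l). of_bool (cw N l i p = cw N l j q) :: real)
      = (\<Sum>p<2^(N+l). \<Sum>q<2^(N+l). \<Sum>a<2^l. of_bool (cw N l i p = a) * of_bool (cw N l j q = a) :: real)"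
    unfolding pt ..
  also have "\<dots> = (\<Sum>a<2^l. \<Sum>p<2^(N+l). \<Sum>q<2^(N+l). of_bool (cw N l i p = a) * of_bool (cw N l j q = a) :: real)"
    by (rule swap_inner3)
  also have "\<dots> = (\<Sum>a<2^l. (\<Sum>p<2^(N+l). of_bool (cw N l i p = a) :: real) * (\<Sum>q<2^(N+l). of_bool (cw N l j q = a)))"
    by (simp only: sum_product)
  also have "\<dots> = (\<Sum>a<(2::nat)^l. (2^(N+l) / 2^l) * (2^(N+l) / 2^l :: real))"
    by (intro sum.cong refl) (simp only: K_count assms lessThan_iff)
  also have "\<dots> = 2^(N+l) * 2^(N+l) / 2^l" by (simp add: power_add)
  finally show ?thesis .
qed

lemma sum_Sm:
  "(\<Sum>p<2^(N+l). \<Sum>q<2^(N+l). Sm N l p q) = real N * real N * (2^(N+l) * 2^(N+l) / 2^l)"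
proof -
  have "(\<Sum>p<2^(N+l). \<Sum>q<2^(N+l). Sm N l p q)
      = (\<Sum>i<N. \<Sum>j<N. \<Sum>p<2^(N+l). \<Sum>q<2^(N+l). of_bool (cw N l i p = cw N l j q) :: real)"
    unfolding Sm_def by (rule swap_inner4)
  also have "\<dots> = (\<Sum>i<N. \<Sum>j<N. (2^(N+l) * 2^(N+l) / 2^l :: real))"
    by (intro sum.cong refl pair_count) auto
  also have "\<dots> = real N * real N * (2^(N+l) * 2^(N+l) / 2^l)" by simp
  finally show ?thesis .
qed

lemma Sm_sq: "(Sm N l p q)^2 = (\<Sum>i<N. \<Sum>i'<N. \<Sum>j<N. \<Sum>j'<N.
      of_bool (cw N l i p = cw N l j q) * of_bool (cw N l i' p = cw N l j' q))"
  unfolding Sm_def power2_eq_square sum_product ..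

lemma sum4_split:
  fixes a b :: "nat \<Rightarrow> nat \<Rightarrow> real"
  shows "(\<Sum>i<N. \<Sum>i'<N. \<Sum>j<N. \<Sum>j'<N. c1 + c2 * (a i i' * b j j'))
       = real N ^ 4 * c1 + c2 * ((\<Sum>i<N. \<Sum>i'<N. a i i') * (\<Sum>j<N. \<Sum>j'<N. b j j'))"
proof -
  have 1: "(\<Sum>i<N. \<Sum>i'<N. \<Sum>j<N. \<Sum>j'<N. c1) = real N ^ 4 * c1"
    by (simp add: power4_eq_xxxx)
  have 2: "(\<Sum>i<N. \<Sum>i'<N. \<Sum>j<N. \<Sum>j'<N. c2 * (a i i' * b j j'))
      = c2 * ((\<Sum>i<N. \<Sum>i'<N. a i i') * (\<Sum>j<N. \<Sum>j'<N. b j j'))"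
  proof -
    have "(\<Sum>i<N. \<Sum>i'<N. a i i') * (\<Sum>j<N. \<Sum>j'<N. b j j') = (\<Sum>i<N. \<Sum>i'<N. a i i' * (\<Sum>j<N. \<Sum>j'<N. b j j'))"
      by (simp only: sum_distrib_right)
    also have "\<dots> = (\<Sum>i<N. \<Sum>i'<N. \<Sum>j<N. \<Sum>j'<N. a i i' * b j j')"
      by (simp only: sum_distrib_left)
    finally show ?thesis by (simp only: sum_distrib_left)
  qed
  show ?thesis by (simp only: sum.distrib 1 2)
qed

lemma geom_dst2: "(\<Sum>i<N. \<Sum>i'<N. (3/4::real)^(dst i i')) \<le> 8 * real N"
proof -
  have "(\<Sum>i<N. \<Sum>i'<N. (3/4::real)^(dst i i')) \<le> (\<Sum>i<N. 8)" by (intro sum_mono geom_dst)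
  then show ?thesis by simp
qed

lemma sum_Sm_sq:
  "(\<Sum>p<2^(N+l). \<Sum>q<2^(N+l). (Sm N l p q)^2)
     \<le> (2^(N+l) * 2^(N+l)) * (real N ^ 4 / 4^l + 64 * real N ^ 2 / 2^l)"
proof -
  define T :: real where "T = 2^(N+l) * 2^(N+l)"
  have T: "T \<ge> 0" unfolding T_def by simp
  let ?X = "\<lambda>i j p q. of_bool (cw N l i p = cw N l j q) :: real"
  have "(\<Sum>p<2^(N+l). \<Sum>q<2^(N+l). (Sm N l p q)^2)
      = (\<Sum>p<2^(N+l). \<Sum>q<2^(N+l). \<Sum>i<N. \<Sum>i'<N. (\<Sum>j<N. \<Sum>j'<N. ?X i j p q * ?X i' j' p q))"
    unfolding Sm_sq ..
  also have "\<dots> = (\<Sum>i<N. \<Sum>i'<N. \<Sum>p<2^(N+l). \<Sum>q<2^(N+l). (\<Sum>j<N. \<Sum>j'<N. ?X i j p q * ?X i' j' p q))"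
    by (rule swap_inner4)
  also have "\<dots> = (\<Sum>i<N. \<Sum>i'<N. \<Sum>j<N. \<Sum>j'<N. Qs N l i j i' j')"
    unfolding Qs_def by (intro sum.cong refl swap_inner4)
  also have "\<dots> \<le> (\<Sum>i<N. \<Sum>i'<N. \<Sum>j<N. \<Sum>j'<N. T * (1/4^l) + (T / 2^l) * ((3/4)^(dst i i') * (3/4)^(dst j j')))"
  proof (intro sum_mono)
    fix i i' j j' assume "i \<in> {..<N}" "i' \<in> {..<N}" "j \<in> {..<N}" "j' \<in> {..<N}"
    then have "Qs N l i j i' j' \<le> T * (1/4^l + (3/4)^(dst i i' + dst j j') / 2^l)"
      unfolding T_def by (intro Qs_final) auto
    also have "\<dots> = T * (1/4^l) + (T / 2^l) * ((3/4)^(dst i i') * (3/4)^(dst j j'))"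
      by (simp add: power_add field_simps)
    finally show "Qs N l i j i' j' \<le> T * (1/4^l) + (T / 2^l) * ((3/4)^(dst i i') * (3/4)^(dst j j'))" .
  qed
  also have "\<dots> = real N ^ 4 * (T * (1/4^l)) + (T / 2^l) * ((\<Sum>i<N. \<Sum>i'<N. (3/4)^(dst i i')) * (\<Sum>j<N. \<Sum>j'<N. (3/4)^(dst j j')))"
    by (rule sum4_split)
  also have "\<dots> \<le> real N ^ 4 * (T * (1/4^l)) + (T / 2^l) * ((8 * real N) * (8 * real N))"
    using T by (intro add_left_mono mult_left_mono mult_mono geom_dst2) (auto intro!: sum_nonneg)
  also have "\<dots> = T * (real N ^ 4 / 4^l + 64 * real N ^ 2 / 2^l)"
    by (simp add: field_simps power2_eq_square)
  finally show ?thesis unfolding T_def .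
qed

definition Bad :: "nat \<Rightarrow> nat \<Rightarrow> (nat \<times> nat) set" where
  "Bad N l = {(p,q). p < 2^(N+l) \<and> q < 2^(N+l) \<and> \<not> (\<exists>i<N. \<exists>j<N. cw N l i p = cw N l j q)}"

lemma Bad_sub: "Bad N l \<subseteq> {..<2^(N+l)} \<times> {..<2^(N+l)}"
  unfolding Bad_def by auto

lemma Sm_Bad: "(p,q) \<in> Bad N l \<Longrightarrow> Sm N l p q = 0"
  unfolding Bad_def Sm_def by (auto intro!: sum.neutral)

lemma card_Bad:
  assumes "N > 0"
  shows "real (card (Bad N l)) \<le> 64 * (2^(N+l) * 2^(N+l)) * 2^l / (real N)^2"
proof -
  define T :: real where "T = 2^(N+l) * 2^(N+l)"
  define E :: real where "E = (real N)^2 / 2^l"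
  have Epos: "E > 0" unfolding E_def using assms by simp
  have fin: "finite ({..<(2::nat)^(N+l)} \<times> {..<(2::nat)^(N+l)})" by simp
  have "real (card (Bad N l)) * E^2 = (\<Sum>w\<in>Bad N l. (Sm N l (fst w) (snd w) - E)^2)"
    by (simp add: Sm_Bad)
  also have "\<dots> \<le> (\<Sum>w\<in>{..<(2::nat)^(N+l)} \<times> {..<(2::nat)^(N+l)}. (Sm N l (fst w) (snd w) - E)^2)"
    by (intro sum_mono2 fin Bad_sub) auto
  also have "\<dots> = (\<Sum>p<2^(N+l). \<Sum>q<2^(N+l). (Sm N l p q - E)^2)"
    by (simp add: sum.cartesian_product case_prod_beta')
  also have "\<dots> = (\<Sum>p<2^(N+l). \<Sum>q<2^(N+l). (Sm N l p q)^2) - 2 * E * (\<Sum>p<2^(N+l). \<Sum>q<2^(N+l). Sm N l p q) + T * E^2"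
    by (simp add: power2_diff sum.distrib sum_subtractf sum_distrib_left T_def mult_ac)
  also have "\<dots> \<le> T * (real N ^ 4 / 4^l + 64 * real N ^ 2 / 2^l) - 2 * E * (T * E) + T * E^2"
  proof -
    have S1: "(\<Sum>p<2^(N+l). \<Sum>q<2^(N+l). Sm N l p q) = T * E"
      unfolding sum_Sm T_def E_def by (simp add: power2_eq_square)
    have S2: "(\<Sum>p<2^(N+l). \<Sum>q<2^(N+l). (Sm N l p q)^2) \<le> T * (real N ^ 4 / 4^l + 64 * real N ^ 2 / 2^l)"
      using sum_Sm_sq[of N l] unfolding T_def .
    show ?thesis unfolding S1 using S2 by linarith
  qed
  also have "\<dots> = 64 * T * E"
  proof -
    have "(2::real)^l * 2^l = 4^l" by (simp add: power_mult_distrib[symmetric])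
    then show ?thesis unfolding E_def by (simp add: field_simps power2_eq_square power4_eq_xxxx)
  qed
  finally have "real (card (Bad N l)) * E^2 \<le> 64 * T * E" .
  then have "real (card (Bad N l)) * E \<le> 64 * T" using Epos
    by (simp add: power2_eq_square)
  then have "real (card (Bad N l)) \<le> 64 * T / E" using Epos by (simp add: field_simps)
  then show ?thesis unfolding T_def E_def by (simp add: field_simps)
qed



lemma space_mu: "space mu = {0..1}" by (simp add: mu_def space_restrict_space)

lemma sets_mu_iff: "A \<in> sets mu \<longleftrightarrow> A \<subseteq> {0..1} \<and> A \<in> sets borel"
  unfolding mu_def by (subst sets_restrict_space_iff) auto

lemma emeasure_mu: "A \<subseteq> {0..1} \<Longrightarrow> emeasure mu A = emeasure lborel A"
  unfolding mu_def by (rule emeasure_restrict_space) auto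

lemma mu_Ico: "0 \<le> a \<Longrightarrow> a \<le> b \<Longrightarrow> b \<le> 1 \<Longrightarrow> emeasure mu {a..<b} = ennreal (b - a)"
  by (subst emeasure_mu) auto

lemma fin_mu: "finite_measure mu"
proof
  show "emeasure mu (space mu) \<noteq> \<infinity>" unfolding space_mu by (subst emeasure_mu) auto
qed

lemma fin_P: "finite_measure (mu \<Otimes>\<^sub>M mu)"
  by (intro finite_measure_pair_measure fin_mu)

lemma emeasure_box: "A \<in> sets mu \<Longrightarrow> B \<in> sets mu \<Longrightarrow> emeasure (mu \<Otimes>\<^sub>M mu) (A \<times> B) = emeasure mu A * emeasure mu B"
proof -
  assume "A \<in> sets mu" "B \<in> sets mu"
  interpret finite_measure mu by (rule fin_mu)
  show ?thesis by (rule emeasure_pair_measure_Times) fact+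
qed

lemma frac_minus_int: "frac (y - of_int k) = frac y"
  by (simp add: frac_def)

lemma doubling_Suc: "(doubling ^^ Suc i) x = frac (2^Suc i * x)"
proof (induction i)
  case 0 then show ?case by (simp add: doubling_def)
next
  case (Suc i)
  have "(doubling ^^ Suc (Suc i)) x = doubling ((doubling ^^ Suc i) x)" by simp
  also have "\<dots> = frac (2 * frac (2^Suc i * x))" unfolding Suc.IH doubling_def ..
  also have "2 * frac (2^Suc i * x) = 2^Suc (Suc i) * x - of_int (2 * \<lfloor>2^Suc i * x\<rfloor>)" by (simp add: frac_def)
  also have "frac \<dots> = frac (2^Suc (Suc i) * x)" by (rule frac_minus_int)
  finally show ?case .
qed

lemma meas_frac[measurable]: "(\<lambda>x::real. frac (c * x)) \<in> borel_measurable borel"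
  unfolding frac_def by measurable

lemma meas_frac_mu[measurable]: "(\<lambda>x::real. frac (c * x)) \<in> borel_measurable mu"
  unfolding mu_def by (intro measurable_restrict_space1) (simp add: meas_frac)

lemma doubling_iter_eq: "(doubling ^^ i) = (\<lambda>x. if i = 0 then x else frac (2^i * x))"
  by (rule ext, cases i) (simp_all only: doubling_Suc, simp_all)

lemma doubling_iter: "x \<in> {0..<1} \<Longrightarrow> (doubling ^^ i) x = frac (2^i * x)"
  by (cases i) (simp_all only: doubling_Suc, simp_all)

lemma meas_iter[measurable]: "(doubling ^^ i) \<in> borel_measurable mu"
  unfolding doubling_iter_eq by (cases "i = 0") (simp_all add: mu_def measurable_restrict_space1)

lemma space_P: "space (mu \<Otimes>\<^sub>M mu) = {0..1} \<times> {0..1}"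
  by (simp add: space_pair_measure space_mu)

lemma E_set_sets: "E_set doubling n r \<in> sets (mu \<Otimes>\<^sub>M mu)"
proof -
  have "E_set doubling n r = (\<Union>i\<in>{..<n}. \<Union>j\<in>{..<n}.
      {z \<in> space (mu \<Otimes>\<^sub>M mu). \<bar>(doubling ^^ i) (fst z) - (doubling ^^ j) (snd z)\<bar> < r})"
    unfolding E_set_def space_P by (auto; blast)
  also have "\<dots> \<in> sets (mu \<Otimes>\<^sub>M mu)"
    by (intro sets.finite_UN finite_lessThan) measurable
  finally show ?thesis .
qed

lemma digit_link:
  fixes x :: real
  assumes "x \<ge> 0" "i \<le> N"
  shows "\<lfloor>2^l * frac (2^i * x)\<rfloor> = int (cw N l i (nat \<lfloor>2^(N+l) * x\<rfloor>))"
proof -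
  define F where "F = \<lfloor>2^(N+l) * x\<rfloor>"
  define G where "G = \<lfloor>2^(i+l) * x\<rfloor>"
  have F0: "F \<ge> 0" unfolding F_def using assms by simp
  have "(2::real)^(N+l) = 2^(i+l) * 2^(N-i)" using assms by (simp add: power_add[symmetric])
  then have e1: "2^(i+l) * x = (2^(N+l) * x) / real_of_int (2^(N-i))" by simp
  have G: "G = F div 2^(N-i)" unfolding G_def F_def e1 by (rule floor_divide_real_eq_div) simp
  have e2: "2^i * x = (2^(i+l) * x) / real_of_int (2^l)" by (simp add: power_add)
  have H: "\<lfloor>2^i * x\<rfloor> = G div 2^l" unfolding G_def e2 by (rule floor_divide_real_eq_div) simp
  have "2^l * frac (2^i * x) = 2^(i+l) * x - of_int (2^l * \<lfloor>2^i * x\<rfloor>)"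
    by (simp add: frac_def power_add algebra_simps)
  then have "\<lfloor>2^l * frac (2^i * x)\<rfloor> = G - 2^l * \<lfloor>2^i * x\<rfloor>" unfolding G_def
    by (simp only: floor_diff_of_int)
  also have "\<dots> = G - 2^l * (G div 2^l)" unfolding H ..
  also have "\<dots> = G mod 2^l" by (metis minus_mult_div_eq_mod)
  also have "\<dots> = int (cw N l i (nat F))" unfolding cw_def win_def G using F0
    by (simp add: zdiv_int zmod_int)
  finally show ?thesis unfolding F_def .
qed

lemma floor_close:
  fixes a b c :: real
  assumes "c > 0" "\<lfloor>c * a\<rfloor> = \<lfloor>c * b\<rfloor>"
  shows "\<bar>a - b\<bar> < 1 / c"
proof -
  have f1: "of_int \<lfloor>c * a\<rfloor> \<le> c * a" "c * a < of_int \<lfloor>c * a\<rfloor> + 1" by linarith+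
  have f2: "of_int \<lfloor>c * b\<rfloor> \<le> c * b" "c * b < of_int \<lfloor>c * b\<rfloor> + 1" by linarith+
  have e: "real_of_int \<lfloor>c * a\<rfloor> = real_of_int \<lfloor>c * b\<rfloor>" using assms(2) by simp
  have "\<bar>c * a - c * b\<bar> < 1" unfolding abs_diff_less_iff using f1 f2 e by linarith
  then have "c * \<bar>a - b\<bar> < 1" using assms(1) by (simp add: abs_mult right_diff_distrib[symmetric])
  then show ?thesis using assms(1) by (simp add: field_simps)
qed

definition box :: "nat \<Rightarrow> nat \<Rightarrow> real set" where
  "box L p = {real p / 2^L ..< (real p + 1) / 2^L}"

definition FB :: "nat \<Rightarrow> nat \<Rightarrow> (real \<times> real) set" where
  "FB N l = (\<Union>w\<in>Bad N l. box (N+l) (fst w) \<times> box (N+l) (snd w))"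

lemma box_sub: "p < 2^L \<Longrightarrow> box L p \<subseteq> {0..1}"
proof -
  assume p: "p < 2^L"
  then have "real p + 1 \<le> 2^L"
    by (metis Suc_leI of_nat_Suc of_nat_le_iff of_nat_numeral of_nat_power add.commute)
  then have a1: "(real p + 1) / 2^L \<le> 1" by simp
  have a2: "0 \<le> real p / 2^L" by simp
  show ?thesis unfolding box_def
  proof
    fix z assume "z \<in> {real p / 2 ^ L..<(real p + 1) / 2 ^ L}"
    then have "real p / 2^L \<le> z" "z < (real p + 1) / 2^L" by auto
    then show "z \<in> {0..1}" using a1 a2 unfolding atLeastAtMost_iff by linarith
  qed
qed

lemma box_sets: "p < 2^L \<Longrightarrow> box L p \<in> sets mu"
  unfolding sets_mu_iff using box_sub by (auto simp: box_def)

lemma box_emeasure: "p < 2^L \<Longrightarrow> emeasure mu (box L p) = ennreal (1 / 2^L)"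
proof -
  assume p: "p < 2^L"
  have "emeasure mu (box L p) = emeasure lborel (box L p)" by (rule emeasure_mu[OF box_sub[OF p]])
  also have "\<dots> = ennreal ((real p + 1) / 2^L - real p / 2^L)" unfolding box_def
    by (rule emeasure_lborel_Ico) (simp add: divide_right_mono)
  also have "(real p + 1) / 2^L - real p / 2^L = 1 / 2^L" by (simp add: field_simps)
  finally show ?thesis .
qed

lemma Bad_lt: "w \<in> Bad N l \<Longrightarrow> fst w < 2^(N+l) \<and> snd w < 2^(N+l)"
  unfolding Bad_def by auto

lemma finite_Bad: "finite (Bad N l)"
  by (rule finite_subset[OF Bad_sub]) simp

lemma FB_sets: "FB N l \<in> sets (mu \<Otimes>\<^sub>M mu)"
  unfolding FB_def
  by (intro sets.finite_UN finite_Bad pair_measureI box_sets) (auto dest: Bad_lt)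

lemma box_prod_measure:
  assumes "p < 2^L" "q < 2^L"
  shows "measure (mu \<Otimes>\<^sub>M mu) (box L p \<times> box L q) = 1 / 2^L * (1 / 2^L)"
proof -
  have "emeasure (mu \<Otimes>\<^sub>M mu) (box L p \<times> box L q) = ennreal (1 / 2^L) * ennreal (1 / 2^L)"
    using assms by (simp add: emeasure_box box_sets box_emeasure)
  also have "\<dots> = ennreal (1 / 2^L * (1 / 2^L))" by (rule ennreal_mult[symmetric]) simp_all
  finally have "emeasure (mu \<Otimes>\<^sub>M mu) (box L p \<times> box L q) = ennreal (1 / 2^L * (1 / 2^L))" .
  then show ?thesis by (simp add: measure_def)
qed

lemma FB_measure:
  assumes "N > 0"
  shows "measure (mu \<Otimes>\<^sub>M mu) (FB N l) \<le> 64 * 2^l / (real N)^2"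
proof -
  interpret P: finite_measure "mu \<Otimes>\<^sub>M mu" by (rule fin_P)
  have "measure (mu \<Otimes>\<^sub>M mu) (FB N l) \<le> (\<Sum>w\<in>Bad N l. measure (mu \<Otimes>\<^sub>M mu) (box (N+l) (fst w) \<times> box (N+l) (snd w)))"
    unfolding FB_def
    by (intro P.finite_measure_subadditive_finite finite_Bad)
       (auto intro!: pair_measureI box_sets dest: Bad_lt)
  also have "\<dots> = (\<Sum>w\<in>Bad N l. 1 / 2^(N+l) * (1 / 2^(N+l)))"
    by (intro sum.cong refl box_prod_measure) (auto dest: Bad_lt)
  also have "\<dots> = real (card (Bad N l)) / (2^(N+l) * 2^(N+l))" by simp
  also have "\<dots> \<le> (64 * (2^(N+l) * 2^(N+l)) * 2^l / (real N)^2) / (2^(N+l) * 2^(N+l))"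
    by (intro divide_right_mono card_Bad assms) simp
  also have "\<dots> = 64 * 2^l / (real N)^2" by simp
  finally show ?thesis .
qed

lemma FB_cover:
  assumes "x \<in> {0..<1}" "y \<in> {0..<1}" "(x, y) \<notin> FB N l"
  shows "\<exists>i<N. \<exists>j<N. \<bar>frac (2^i * x) - frac (2^j * y)\<bar> < 1 / 2^l"
proof -
  define L where "L = N + l"
  define p where "p = nat \<lfloor>2^L * x\<rfloor>"
  define q where "q = nat \<lfloor>2^L * y\<rfloor>"
  have inbox: "z \<in> box L (nat \<lfloor>2^L * z\<rfloor>) \<and> nat \<lfloor>2^L * z\<rfloor> < 2^L" if z: "z \<in> {0..<1}" for z
  proof -
    have z0: "0 \<le> 2^L * z" using z by simp
    have "2^L * z < 2^L" using z by simp
    then have "\<lfloor>2^L * z\<rfloor> < 2^L" by (metis floor_less_iff of_int_numeral of_int_power)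
    then have lt: "nat \<lfloor>2^L * z\<rfloor> < 2^L" using z0 by (simp add: nat_less_iff)
    have "real (nat \<lfloor>2^L * z\<rfloor>) = of_int \<lfloor>2^L * z\<rfloor>" using z0 by simp
    moreover have "of_int \<lfloor>2^L * z\<rfloor> \<le> 2^L * z" "2^L * z < of_int \<lfloor>2^L * z\<rfloor> + 1" by linarith+
    ultimately have "real (nat \<lfloor>2^L * z\<rfloor>) / 2^L \<le> z" "z < (real (nat \<lfloor>2^L * z\<rfloor>) + 1) / 2^L"
      by (simp_all add: field_simps)
    then show ?thesis using lt unfolding box_def by auto
  qed
  have "(p, q) \<notin> Bad N l"
  proof
    assume "(p, q) \<in> Bad N l"
    then have "(x, y) \<in> box L p \<times> box L q" using inbox assms unfolding p_def q_def by auto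
    then show False using assms(3) \<open>(p, q) \<in> Bad N l\<close> unfolding FB_def L_def by force
  qed
  then obtain i j where ij: "i < N" "j < N" "cw N l i p = cw N l j q"
    using inbox assms unfolding Bad_def p_def q_def L_def by auto
  have "\<lfloor>2^l * frac (2^i * x)\<rfloor> = \<lfloor>2^l * frac (2^j * y)\<rfloor>"
    using digit_link[of x i N l] digit_link[of y j N l] ij assms unfolding p_def q_def L_def by simp
  then have "\<bar>frac (2^i * x) - frac (2^j * y)\<bar> < 1 / 2^l" by (intro floor_close) simp_all
  then show ?thesis using ij by blast
qed

lemma choose_l:
  fixes rho :: real assumes "rho > 0"
  shows "1 / 2^(nat \<lceil>log 2 (1/rho)\<rceil>) \<le> rho" "2^(nat \<lceil>log 2 (1/rho)\<rceil>) \<le> 1 + 2 / rho"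
proof -
  define c where "c = log 2 (1/rho)"
  define l where "l = nat \<lceil>c\<rceil>"
  have pc: "2 powr c = 1 / rho" unfolding c_def using assms by simp
  have pl: "(2::real)^l = 2 powr (real l)" by (simp add: powr_realpow)
  have "c \<le> real l" unfolding l_def by linarith
  then have "2 powr c \<le> 2 powr (real l)" by simp
  then have "1 / rho \<le> 2^l" using pc pl by simp
  then show "1 / 2^(nat \<lceil>log 2 (1/rho)\<rceil>) \<le> rho" unfolding l_def c_def[symmetric] using assms
    by (simp add: field_simps)
  show "2^(nat \<lceil>log 2 (1/rho)\<rceil>) \<le> 1 + 2 / rho"
  proof (cases "\<lceil>c\<rceil> \<le> 0")
    case True
    then have "l = 0" unfolding l_def by simp
    then show ?thesis unfolding l_def c_def[symmetric] using assms by simp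
  next
    case False
    then have "real l < c + 1" unfolding l_def by linarith
    then have "2 powr (real l) \<le> 2 powr (c + 1)" by simp
    also have "\<dots> = 2 / rho" using pc by (simp add: powr_add)
    finally have "2^l \<le> 2 / rho" using pl by simp
    then show ?thesis unfolding l_def c_def[symmetric] by simp
  qed
qed

theorem mainTheorem7:
  fixes r :: "nat \<Rightarrow> real"
  assumes "decseq r"
    and "\<And>n. r n > 0"
    and "summable (\<lambda>n. 1 / (2 ^ (2 * n) * r (2 ^ n)))"
  shows "emeasure (mu \<Otimes>\<^sub>M mu) (\<Union>N. \<Inter>n\<in>{N..}. E_set doubling n (r n)) = 1"
proof -
  define P where "P = mu \<Otimes>\<^sub>M mu"
  interpret P: finite_measure P unfolding P_def by (rule fin_P)
  define lk where "lk k = nat \<lceil>log 2 (1 / r (2^(k+1)))\<rceil>" for k :: nat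
  define F where "F k = FB (2^k) (lk k)" for k :: nat
  define A where "A = (\<Union>N. \<Inter>n\<in>{N..}. E_set doubling n (r n))"
  have lk1: "1 / 2^(lk k) \<le> r (2^(k+1))" for k
    unfolding lk_def by (rule choose_l) (rule assms(2))
  have lk2: "2^(lk k) \<le> 1 + 2 / r (2^(k+1))" for k
    unfolding lk_def by (rule choose_l) (rule assms(2))
  have Fsets: "F k \<in> sets P" for k unfolding F_def P_def by (rule FB_sets)
  have Fmeas: "measure P (F k) \<le> 64 / 4^k + 512 * (1 / (2 ^ (2 * (k+1)) * r (2 ^ (k+1))))" for k
  proof -
    have rp: "r (2^(k+1)) > 0" by (rule assms(2))
    have "measure P (F k) \<le> 64 * 2^(lk k) / (real (2^k))^2"
      unfolding P_def F_def by (rule FB_measure) simp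
    also have "\<dots> \<le> 64 * (1 + 2 / r (2^(k+1))) / (real (2^k))^2"
      by (intro divide_right_mono mult_left_mono lk2) simp_all
    also have "\<dots> = 64 / 4^k + 512 * (1 / (2 ^ (2 * (k+1)) * r (2 ^ (k+1))))"
      using rp by (simp add: field_simps power_mult power2_eq_square power_mult_distrib[symmetric])
    finally show ?thesis .
  qed
  have summ: "summable (\<lambda>k. measure P (F k))"
  proof (rule summable_comparison_test')
    have s1: "summable (\<lambda>k. 64 / 4^k :: real)"
    proof -
      have "summable (\<lambda>k. (1/4::real)^k)" by (rule summable_geometric) simp
      then have "summable (\<lambda>k. 64 * (1/4::real)^k)" by (rule summable_mult)
      then show ?thesis by (simp add: power_one_over)
    qed
    have s2: "summable (\<lambda>k. 1 / (2 ^ (2 * (k+1)) * r (2 ^ (k+1))))"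
      using summable_ignore_initial_segment[OF assms(3), of 1] by simp
    show "summable (\<lambda>k. 64 / 4^k + 512 * (1 / (2 ^ (2 * (k+1)) * r (2 ^ (k+1)))))"
      by (intro summable_add s1 summable_mult s2)
    show "norm (measure P (F k)) \<le> 64 / 4^k + 512 * (1 / (2 ^ (2 * (k+1)) * r (2 ^ (k+1))))" for k
      using Fmeas[of k] by simp
  qed
  have null1: "limsup F \<in> null_sets P"
    by (rule borel_cantelli_limsup1) (use Fsets summ in \<open>auto simp: P.emeasure_eq_measure\<close>)
  define Z where "Z = ({1::real} \<times> {0..1::real}) \<union> ({0..1::real} \<times> {1::real})"
  have one_sets: "{1::real} \<in> sets mu" "{0..1::real} \<in> sets mu" by (simp_all add: sets_mu_iff)
  have one_null: "emeasure mu {1} = 0" by (subst emeasure_mu) auto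
  have null2: "Z \<in> null_sets P"
  proof -
    have "{1} \<times> {0..1} \<in> null_sets P" "{0..1} \<times> {1::real} \<in> null_sets P"
      unfolding P_def null_sets_def using one_sets one_null
      by (auto simp: emeasure_box intro!: pair_measureI)
    then show ?thesis unfolding Z_def by (rule null_sets.Un)
  qed
  have Asets: "A \<in> sets P"
    unfolding A_def P_def
  proof (intro sets.countable_UN'')
    fix N :: nat
    show "(\<Inter>n\<in>{N..}. E_set doubling n (r n)) \<in> sets (mu \<Otimes>\<^sub>M mu)"
      by (rule sets.countable_INT') (auto intro: E_set_sets)
  qed simp
  have Asub: "A \<subseteq> space P"
    unfolding A_def P_def space_P E_set_def by auto
  have cover: "space P - A \<subseteq> limsup F \<union> Z"
  proof
    fix z assume z: "z \<in> space P - A"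
    show "z \<in> limsup F \<union> Z"
    proof (rule ccontr)
      assume nz: "z \<notin> limsup F \<union> Z"
      obtain x y where xy: "z = (x, y)" by fastforce
      have xy01: "x \<in> {0..<1}" "y \<in> {0..<1}"
        using z nz unfolding xy P_def space_P Z_def by auto
      obtain K where K: "\<And>k. k \<ge> K \<Longrightarrow> z \<notin> F k"
        using nz unfolding limsup_INF_SUP by auto
      have "z \<in> E_set doubling n (r n)" if n: "n \<ge> 2^K" for n
      proof -
        have "n \<ge> 1" using n by (meson le_trans one_le_power one_le_numeral)
        then obtain k where k: "2^k \<le> n" "n < 2^(k+1)" using ex_power_ivl1[of 2 n] by auto
        have "k \<ge> K"
        proof (rule ccontr)
          assume "\<not> k \<ge> K"
          then have "2^(k+1) \<le> (2::nat)^K" by (intro power_increasing) auto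
          then show False using k n by linarith
        qed
        then have "(x, y) \<notin> FB (2^k) (lk k)" using K xy unfolding F_def by auto
        then obtain i j where ij: "i < 2^k" "j < 2^k" "\<bar>frac (2^i * x) - frac (2^j * y)\<bar> < 1 / 2^(lk k)"
          using FB_cover[OF xy01] by blast
        have "r (2^(k+1)) \<le> r n" using assms(1) k(2) by (simp add: decseq_def)
        then have "\<bar>(doubling ^^ i) x - (doubling ^^ j) y\<bar> < r n"
          using ij(3) lk1[of k] xy01 by (simp add: doubling_iter)
        moreover have "i < n" "j < n" using ij k by auto
        ultimately show ?thesis unfolding E_set_def xy using xy01 by auto
      qed
      then have "z \<in> A" unfolding A_def by auto
      then show False using z by auto
    qed
  qed
  have null3: "space P - A \<in> null_sets P"
    by (rule null_sets_subset[OF null_sets.Un[OF null1 null2] _ cover]) (use Asets in auto)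
  have spc: "emeasure P (space P) = 1"
    unfolding P_def space_P using one_sets by (simp add: emeasure_box emeasure_mu)
  have "emeasure P A + emeasure P (space P - A) = emeasure P (A \<union> (space P - A))"
    by (rule plus_emeasure) (use Asets in auto)
  also have "A \<union> (space P - A) = space P" using Asub by auto
  finally have "emeasure P A = 1" using null_setsD1[OF null3] spc by simp
  then show ?thesis unfolding P_def A_def .
qed


end
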